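(* Let $G$ and $H$ be graphs, each with at least $2$ vertices. The Cartesian product $G \Box H$ is $1$-perfectly orientable if and only if one of the following holds: (i) $G$ is edgeless and $H$ is $1$-perfectly orientable, or vice versa (i.e. $H$ is edgeless and $G$ is $1$-perfectly orientable); (ii) $G\cong pK_1+qK_2$ and $H\cong rK_1+sK_2$ for some integers $p,q,r,s\ge 0$.
   Context: All graphs are finite and simple. An orientation of a graph $G$ is $1$-perfect if the out-neighborhood of every vertex induces a clique in $G$; $G$ is $1$-perfectly orientable ($1$-p.o.) if it admits a $1$-perfect orientation. The Cartesian product $G\Box H$ has vertex set $V(G)\times V(H)$, with distinct $(u,v),(u',v')$ adjacent iff either $u=u'$ and $vv'\in E(H)$, or $v=v'$ and $uu'\in E(G)$. $G+H$ denotes disjoint union and $kG$ the disjoint union of $k$ copies of $G$; $K_n$ is the complete graph on $n$ vertices. *)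

theory Defs
  imports Main
begin

definition graph :: "'a set \<Rightarrow> ('a \<Rightarrow> 'a \<Rightarrow> bool) \<Rightarrow> bool" where
  "graph V E \<longleftrightarrow> finite V \<and> (\<forall>u v. E u v \<longrightarrow> u \<in> V \<and> v \<in> V \<and> u \<noteq> v \<and> E v u)"

definition orientation :: "'a set \<Rightarrow> ('a \<Rightarrow> 'a \<Rightarrow> bool) \<Rightarrow> ('a \<Rightarrow> 'a \<Rightarrow> bool) \<Rightarrow> bool" where
  "orientation V E D \<longleftrightarrow> (\<forall>u v. D u v \<longrightarrow> E u v) \<and> (\<forall>u v. E u v \<longrightarrow> D u v \<or> D v u)
     \<and> (\<forall>u v. D u v \<longrightarrow> \<not> D v u)"

definition one_perfect_orientation :: "'a set \<Rightarrow> ('a \<Rightarrow> 'a \<Rightarrow> bool) \<Rightarrow> ('a \<Rightarrow> 'a \<Rightarrow> bool) \<Rightarrow> bool" where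
  "one_perfect_orientation V E D \<longleftrightarrow> orientation V E D \<and>
     (\<forall>v\<in>V. \<forall>x y. D v x \<longrightarrow> D v y \<longrightarrow> x \<noteq> y \<longrightarrow> E x y)"

definition one_po :: "'a set \<Rightarrow> ('a \<Rightarrow> 'a \<Rightarrow> bool) \<Rightarrow> bool" where
  "one_po V E \<longleftrightarrow> (\<exists>D. one_perfect_orientation V E D)"

definition edgeless :: "'a set \<Rightarrow> ('a \<Rightarrow> 'a \<Rightarrow> bool) \<Rightarrow> bool" where
  "edgeless V E \<longleftrightarrow> (\<forall>u\<in>V. \<forall>v\<in>V. \<not> E u v)"

text \<open>Cartesian product (vertex set is V1 \<times> V2).\<close>
definition cart_E :: "('a \<Rightarrow> 'a \<Rightarrow> bool) \<Rightarrow> ('b \<Rightarrow> 'b \<Rightarrow> bool) \<Rightarrow> ('a \<times> 'b) \<Rightarrow> ('a \<times> 'b) \<Rightarrow> bool" where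
  "cart_E E1 E2 x y \<longleftrightarrow> (fst x = fst y \<and> E2 (snd x) (snd y)) \<or> (snd x = snd y \<and> E1 (fst x) (fst y))"

definition iso :: "'a set \<Rightarrow> ('a \<Rightarrow> 'a \<Rightarrow> bool) \<Rightarrow> 'b set \<Rightarrow> ('b \<Rightarrow> 'b \<Rightarrow> bool) \<Rightarrow> bool" where
  "iso V E W F \<longleftrightarrow> (\<exists>f. bij_betw f V W \<and> (\<forall>u\<in>V. \<forall>v\<in>V. E u v \<longleftrightarrow> F (f u) (f v)))"

text \<open>The graph pK_1 + qK_2: isolated vertices Inl i (i < p) and edges
  Inr (j,False) -- Inr (j,True) for j < q.\<close>
definition K1K2_V :: "nat \<Rightarrow> nat \<Rightarrow> (nat + nat \<times> bool) set" where
  "K1K2_V p q = Inl ` {..<p} \<union> Inr ` ({..<q} \<times> UNIV)"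

definition K1K2_E :: "(nat + nat \<times> bool) \<Rightarrow> (nat + nat \<times> bool) \<Rightarrow> bool" where
  "K1K2_E x y \<longleftrightarrow> (\<exists>j b b'. x = Inr (j, b) \<and> y = Inr (j, b') \<and> b \<noteq> b')"

end

theory Submission
  imports Defs
begin


lemma opo_nc: assumes "one_perfect_orientation V E D" "v\<in>V" "x\<noteq>y" "\<not>E x y"
  shows "\<not>(D v x \<and> D v y)"
  using assms unfolding one_perfect_orientation_def by blast

lemma opo_or: assumes "one_perfect_orientation V E D" "E x y" shows "D x y \<or> D y x"
  using assms unfolding one_perfect_orientation_def orientation_def by blast

lemma opo_as: assumes "one_perfect_orientation V E D" shows "\<not>(D x y \<and> D y x)"
  using assms unfolding one_perfect_orientation_def orientation_def by blast

lemma bad_H: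
  assumes g1: "graph V1 E1" and g2: "graph V2 E2"
    and D: "one_perfect_orientation (V1\<times>V2) (cart_E E1 E2) D"
    and e: "E1 a a'" "E2 b b1" "E2 b b2" "b1 \<noteq> b2"
  shows False
proof -
  have v: "a\<in>V1" "a'\<in>V1" "b\<in>V2" "b1\<in>V2" "b2\<in>V2" "a\<noteq>a'" "b\<noteq>b1" "b\<noteq>b2" "a'\<noteq>a" "b1\<noteq>b" "b2\<noteq>b" "b2\<noteq>b1"
    "E1 a' a" "E2 b1 b" "E2 b2 b"
    using g1 g2 e unfolding graph_def by blast+
  have orr: "\<And>x y. cart_E E1 E2 x y \<Longrightarrow> D x y \<or> D y x" using opo_or[OF D] by blast
  have as: "\<And>x y. \<not>(D x y \<and> D y x)" using opo_as[OF D] by blast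
  have nc: "\<And>v x y. v \<in> V1\<times>V2 \<Longrightarrow> x\<noteq>y \<Longrightarrow> \<not> cart_E E1 E2 x y \<Longrightarrow> \<not>(D v x \<and> D v y)"
    using opo_nc[OF D] by blast
  have o: "D (a,b) (a',b) \<or> D (a',b) (a,b)" "D (a,b) (a,b1) \<or> D (a,b1) (a,b)"
    "D (a,b) (a,b2) \<or> D (a,b2) (a,b)" "D (a',b) (a',b1) \<or> D (a',b1) (a',b)"
    "D (a',b) (a',b2) \<or> D (a',b2) (a',b)" "D (a,b1) (a',b1) \<or> D (a',b1) (a,b1)"
    "D (a,b2) (a',b2) \<or> D (a',b2) (a,b2)"
    by (rule orr; simp add: cart_E_def e v)+
  have n: "\<not>(D (a,b) (a,b1) \<and> D (a,b) (a',b))" "\<not>(D (a,b) (a,b2) \<and> D (a,b) (a',b))"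
    "\<not>(D (a',b) (a',b1) \<and> D (a',b) (a,b))" "\<not>(D (a',b) (a',b2) \<and> D (a',b) (a,b))"
    "\<not>(D (a,b1) (a,b) \<and> D (a,b1) (a',b1))" "\<not>(D (a,b2) (a,b) \<and> D (a,b2) (a',b2))"
    "\<not>(D (a',b1) (a',b) \<and> D (a',b1) (a,b1))" "\<not>(D (a',b2) (a',b) \<and> D (a',b2) (a,b2))"
    by (rule nc; auto simp: cart_E_def v e)+
  show False
  proof (cases "E2 b1 b2")
    case True
    have o2: "D (a,b1) (a,b2) \<or> D (a,b2) (a,b1)" "D (a',b1) (a',b2) \<or> D (a',b2) (a',b1)"
      by (rule orr; simp add: cart_E_def True)+
    have n2: "\<not>(D (a,b1) (a,b2) \<and> D (a,b1) (a',b1))" "\<not>(D (a,b2) (a,b1) \<and> D (a,b2) (a',b2))"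
      "\<not>(D (a',b1) (a',b2) \<and> D (a',b1) (a,b1))" "\<not>(D (a',b2) (a',b1) \<and> D (a',b2) (a,b2))"
      by (rule nc; auto simp: cart_E_def v e)+
    show False using o n o2 n2 as by blast
  next
    case False
    have n2: "\<not>(D (a,b) (a,b1) \<and> D (a,b) (a,b2))" "\<not>(D (a',b) (a',b1) \<and> D (a',b) (a',b2))"
      by (rule nc; auto simp: cart_E_def v e False)+
    show False using o n n2 as by blast
  qed
qed
lemma bad_G:
  assumes g1: "graph V1 E1" and g2: "graph V2 E2"
    and D: "one_perfect_orientation (V1\<times>V2) (cart_E E1 E2) D"
    and e: "E2 a a'" "E1 b b1" "E1 b b2" "b1 \<noteq> b2"
  shows False
proof -
  have v: "a\<in>V2" "a'\<in>V2" "b\<in>V1" "b1\<in>V1" "b2\<in>V1" "a\<noteq>a'" "b\<noteq>b1" "b\<noteq>b2" "a'\<noteq>a" "b1\<noteq>b" "b2\<noteq>b" "b2\<noteq>b1"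
    "E2 a' a" "E1 b1 b" "E1 b2 b"
    using g1 g2 e unfolding graph_def by blast+
  have orr: "\<And>x y. cart_E E1 E2 x y \<Longrightarrow> D x y \<or> D y x" using opo_or[OF D] by blast
  have as: "\<And>x y. \<not>(D x y \<and> D y x)" using opo_as[OF D] by blast
  have nc: "\<And>v x y. v \<in> V1\<times>V2 \<Longrightarrow> x\<noteq>y \<Longrightarrow> \<not> cart_E E1 E2 x y \<Longrightarrow> \<not>(D v x \<and> D v y)"
    using opo_nc[OF D] by blast
  have o: "D (b,a) (b,a') \<or> D (b,a') (b,a)" "D (b,a) (b1,a) \<or> D (b1,a) (b,a)"
    "D (b,a) (b2,a) \<or> D (b2,a) (b,a)" "D (b,a') (b1,a') \<or> D (b1,a') (b,a')"
    "D (b,a') (b2,a') \<or> D (b2,a') (b,a')" "D (b1,a) (b1,a') \<or> D (b1,a') (b1,a)"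
    "D (b2,a) (b2,a') \<or> D (b2,a') (b2,a)"
    by (rule orr; simp add: cart_E_def e v)+
  have n: "\<not>(D (b,a) (b1,a) \<and> D (b,a) (b,a'))" "\<not>(D (b,a) (b2,a) \<and> D (b,a) (b,a'))"
    "\<not>(D (b,a') (b1,a') \<and> D (b,a') (b,a))" "\<not>(D (b,a') (b2,a') \<and> D (b,a') (b,a))"
    "\<not>(D (b1,a) (b,a) \<and> D (b1,a) (b1,a'))" "\<not>(D (b2,a) (b,a) \<and> D (b2,a) (b2,a'))"
    "\<not>(D (b1,a') (b,a') \<and> D (b1,a') (b1,a))" "\<not>(D (b2,a') (b,a') \<and> D (b2,a') (b2,a))"
    by (rule nc; auto simp: cart_E_def v e)+
  show False
  proof (cases "E1 b1 b2")
    case True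
    have o2: "D (b1,a) (b2,a) \<or> D (b2,a) (b1,a)" "D (b1,a') (b2,a') \<or> D (b2,a') (b1,a')"
      by (rule orr; simp add: cart_E_def True)+
    have n2: "\<not>(D (b1,a) (b2,a) \<and> D (b1,a) (b1,a'))" "\<not>(D (b2,a) (b1,a) \<and> D (b2,a) (b2,a'))"
      "\<not>(D (b1,a') (b2,a') \<and> D (b1,a') (b1,a))" "\<not>(D (b2,a') (b1,a') \<and> D (b2,a') (b2,a))"
      by (rule nc; auto simp: cart_E_def v e)+
    show False using o n o2 n2 as by blast
  next
    case False
    have n2: "\<not>(D (b,a) (b1,a) \<and> D (b,a) (b2,a))" "\<not>(D (b,a') (b1,a') \<and> D (b,a') (b2,a'))"
      by (rule nc; auto simp: cart_E_def v e False)+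
    show False using o n n2 as by blast
  qed
qed

lemma induced_H:
  assumes g1: "graph V1 E1" and g2: "graph V2 E2"
    and D: "one_perfect_orientation (V1\<times>V2) (cart_E E1 E2) D" and a0: "a0 \<in> V1"
  shows "one_po V2 E2"
  unfolding one_po_def
proof (intro exI[of _ "\<lambda>b b'. D (a0,b) (a0,b')"])
  have irr: "\<not> E1 a0 a0" using g1 unfolding graph_def by blast
  show "one_perfect_orientation V2 E2 (\<lambda>b b'. D (a0, b) (a0, b'))"
    using D a0 irr unfolding one_perfect_orientation_def orientation_def cart_E_def
    by (auto; metis fst_conv snd_conv)+
qed

lemma induced_G:
  assumes g1: "graph V1 E1" and g2: "graph V2 E2"
    and D: "one_perfect_orientation (V1\<times>V2) (cart_E E1 E2) D" and b0: "b0 \<in> V2"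
  shows "one_po V1 E1"
  unfolding one_po_def
proof (intro exI[of _ "\<lambda>a a'. D (a,b0) (a',b0)"])
  have irr: "\<not> E2 b0 b0" using g2 unfolding graph_def by blast
  show "one_perfect_orientation V1 E1 (\<lambda>a a'. D (a, b0) (a', b0))"
    using D b0 irr unfolding one_perfect_orientation_def orientation_def cart_E_def
    by (auto; metis fst_conv snd_conv)+
qed

lemma edgeless_G:
  assumes g1: "graph V1 E1" and g2: "graph V2 E2" and el: "edgeless V1 E1" and po: "one_po V2 E2"
  shows "one_po (V1\<times>V2) (cart_E E1 E2)"
proof -
  have E1f: "\<And>u v. \<not> E1 u v" using g1 el unfolding graph_def edgeless_def by blast
  obtain D2 where D2: "one_perfect_orientation V2 E2 D2" using po unfolding one_po_def by blast
  show ?thesis unfolding one_po_def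
  proof (intro exI[of _ "\<lambda>x y. fst x = fst y \<and> D2 (snd x) (snd y)"])
    show "one_perfect_orientation (V1 \<times> V2) (cart_E E1 E2) (\<lambda>x y. fst x = fst y \<and> D2 (snd x) (snd y))"
      unfolding one_perfect_orientation_def orientation_def
    proof (intro conjI allI impI ballI)
      fix v x y assume v: "v \<in> V1\<times>V2" and vx: "fst v = fst x \<and> D2 (snd v) (snd x)"
        and vy: "fst v = fst y \<and> D2 (snd v) (snd y)" and xy: "x \<noteq> y"
      have "snd x \<noteq> snd y" using vx vy xy by (simp add: prod_eq_iff)
      hence "E2 (snd x) (snd y)" using D2 v vx vy unfolding one_perfect_orientation_def by auto
      thus "cart_E E1 E2 x y" using vx vy unfolding cart_E_def by auto
    qed (use D2 E1f in \<open>auto simp: one_perfect_orientation_def orientation_def cart_E_def\<close>)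
  qed
qed

lemma edgeless_H:
  assumes g1: "graph V1 E1" and g2: "graph V2 E2" and el: "edgeless V2 E2" and po: "one_po V1 E1"
  shows "one_po (V1\<times>V2) (cart_E E1 E2)"
proof -
  have E2f: "\<And>u v. \<not> E2 u v" using g2 el unfolding graph_def edgeless_def by blast
  obtain D1 where D1: "one_perfect_orientation V1 E1 D1" using po unfolding one_po_def by blast
  show ?thesis unfolding one_po_def
  proof (intro exI[of _ "\<lambda>x y. snd x = snd y \<and> D1 (fst x) (fst y)"])
    show "one_perfect_orientation (V1 \<times> V2) (cart_E E1 E2) (\<lambda>x y. snd x = snd y \<and> D1 (fst x) (fst y))"
      unfolding one_perfect_orientation_def orientation_def
    proof (intro conjI allI impI ballI)
      fix v x y assume v: "v \<in> V1\<times>V2" and vx: "snd v = snd x \<and> D1 (fst v) (fst x)"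
        and vy: "snd v = snd y \<and> D1 (fst v) (fst y)" and xy: "x \<noteq> y"
      have "fst x \<noteq> fst y" using vx vy xy by (simp add: prod_eq_iff)
      hence "E1 (fst x) (fst y)" using D1 v vx vy unfolding one_perfect_orientation_def by auto
      thus "cart_E E1 E2 x y" using vx vy unfolding cart_E_def by auto
    qed (use D1 E2f in \<open>auto simp: one_perfect_orientation_def orientation_def cart_E_def\<close>)
  qed
qed

lemma iso_prop:
  fixes V :: "'a set"
  assumes g: "graph V E" and i: "iso V E (K1K2_V p q) K1K2_E"
  shows "\<exists>t::'a\<Rightarrow>bool. (\<forall>u v. E u v \<longrightarrow> t u \<noteq> t v) \<and> (\<forall>a x y. E a x \<longrightarrow> E a y \<longrightarrow> x = y)"
proof -
  obtain f where bij: "bij_betw f V (K1K2_V p q)" and fe: "\<forall>u\<in>V. \<forall>v\<in>V. E u v \<longleftrightarrow> K1K2_E (f u) (f v)"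
    using i unfolding iso_def by blast
  have inV: "E u v \<Longrightarrow> u \<in> V \<and> v \<in> V" for u v using g unfolding graph_def by blast
  define t where "t u = (case f u of Inl _ \<Rightarrow> False | Inr jb \<Rightarrow> snd jb)" for u
  have 1: "E u v \<longrightarrow> t u \<noteq> t v" for u v
    using fe inV[of u v] unfolding K1K2_E_def t_def by fastforce
  have 2: "E a x \<longrightarrow> E a y \<longrightarrow> x = y" for a x y
  proof (intro impI)
    assume ax: "E a x" and ay: "E a y"
    have "f x = f y" using fe inV[OF ax] inV[OF ay] ax ay unfolding K1K2_E_def by fastforce
    thus "x = y" using bij inV[OF ax] inV[OF ay] unfolding bij_betw_def inj_on_def by blast
  qed
  show ?thesis using 1 2 by blast
qed

lemma cart_sym: "graph V1 E1 \<Longrightarrow> graph V2 E2 \<Longrightarrow> cart_E E1 E2 u v \<Longrightarrow> cart_E E1 E2 v u"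
  unfolding cart_E_def graph_def by (elim disjE conjE; simp)

lemma matchings:
  fixes t1 :: "'a \<Rightarrow> bool" and t2 :: "'b \<Rightarrow> bool" and V1 :: "'a set" and V2 :: "'b set"
  assumes g1: "graph V1 E1" and g2: "graph V2 E2"
    and t1: "\<forall>u v. E1 u v \<longrightarrow> t1 u \<noteq> t1 v" and d1: "\<forall>a x y. E1 a x \<longrightarrow> E1 a y \<longrightarrow> x = y"
    and t2: "\<forall>u v. E2 u v \<longrightarrow> t2 u \<noteq> t2 v" and d2: "\<forall>a x y. E2 a x \<longrightarrow> E2 a y \<longrightarrow> x = y"
  shows "one_po (V1\<times>V2) (cart_E E1 E2)"
proof -
  have irr1: "\<And>u. \<not> E1 u u" using g1 unfolding graph_def by blast
  have irr2: "\<And>u. \<not> E2 u u" using g2 unfolding graph_def by blast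
  have sym1: "\<And>u v. E1 u v \<Longrightarrow> E1 v u" using g1 unfolding graph_def by blast
  have sym2: "\<And>u v. E2 u v \<Longrightarrow> E2 v u" using g2 unfolding graph_def by blast
  define D where "D x y = (cart_E E1 E2 x y \<and> (if snd x = snd y then t1 (fst x) = t2 (snd x) else t1 (fst x) \<noteq> t2 (snd x)))" for x y
  have "one_perfect_orientation (V1\<times>V2) (cart_E E1 E2) D"
    unfolding one_perfect_orientation_def orientation_def
  proof (intro conjI allI impI ballI)
    show "D u v \<Longrightarrow> cart_E E1 E2 u v" for u v unfolding D_def by blast
    have key: "(D u v \<longleftrightarrow> \<not> D v u)" if c: "cart_E E1 E2 u v" for u v
    proof (cases "snd u = snd v")
      case True
      have "E1 (fst u) (fst v)" using c True irr2 unfolding cart_E_def by auto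
      hence "t1 (fst u) \<noteq> t1 (fst v)" using t1 by blast
      moreover have cvu: "cart_E E1 E2 v u" using cart_sym[OF g1 g2 c] .
      moreover have "D u v \<longleftrightarrow> t1 (fst u) = t2 (snd u)" using c True unfolding D_def by simp
      moreover have "D v u \<longleftrightarrow> t1 (fst v) = t2 (snd u)" using cvu True unfolding D_def by simp
      ultimately show ?thesis by (cases "t2 (snd u)") auto
    next
      case False
      have "E2 (snd u) (snd v)" "fst u = fst v" using c False unfolding cart_E_def by auto
      hence "t2 (snd u) \<noteq> t2 (snd v)" using t2 by blast
      moreover have cvu: "cart_E E1 E2 v u" using cart_sym[OF g1 g2 c] .
      moreover have "D u v \<longleftrightarrow> t1 (fst u) \<noteq> t2 (snd u)" using c False unfolding D_def by simp
      moreover have "D v u \<longleftrightarrow> t1 (fst u) \<noteq> t2 (snd v)" using cvu False \<open>fst u = fst v\<close> unfolding D_def by auto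
      ultimately show ?thesis by (cases "t1 (fst u)") auto
    qed
    show "cart_E E1 E2 u v \<Longrightarrow> D u v \<or> D v u" for u v using key by blast
    show "D u v \<Longrightarrow> \<not> D v u" for u v using key unfolding D_def by blast
    show "cart_E E1 E2 x y" if "v \<in> V1\<times>V2" "D v x" "D v y" "x \<noteq> y" for v x y
    proof -
      obtain a b where v: "v = (a,b)" by (cases v)
      obtain ax bx where x: "x = (ax,bx)" by (cases x)
      obtain ay bq where y: "y = (ay,bq)" by (cases y)
      have vx: "cart_E E1 E2 (a,b) (ax,bx)" "if b = bx then t1 a = t2 b else t1 a \<noteq> t2 b"
        using that(2) unfolding D_def v x by (auto split: if_splits)
      have vy: "cart_E E1 E2 (a,b) (ay,bq)" "if b = bq then t1 a = t2 b else t1 a \<noteq> t2 b"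
        using that(3) unfolding D_def v y by (auto split: if_splits)
      have False
      proof (cases "b = bx")
        case T1: True
        show False
        proof (cases "b = bq")
          case True
          have "E1 a ax" "E1 a ay" using vx(1) vy(1) T1 True irr2 unfolding cart_E_def by auto
          hence "ax = ay" using d1 by blast
          thus False using that(4) x y T1 True by simp
        next
          case False
          thus False using vx(2) vy(2) T1 by simp
        qed
      next
        case F1: False
        show False
        proof (cases "b = bq")
          case True
          thus False using vx(2) vy(2) F1 by simp
        next
          case False
          have "E2 b bx" "E2 b bq" "a = ax" "a = ay" using vx(1) vy(1) F1 False unfolding cart_E_def by auto
          hence "bx = bq" using d2 by blast
          thus False using that(4) x y \<open>a = ax\<close> \<open>a = ay\<close> by simp
        qed
      qed
      thus ?thesis ..
    qed
  qed
  thus ?thesis unfolding one_po_def by blast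
qed



lemma deg1_iso:
  fixes V :: "'a set"
  assumes g: "graph V E" and d: "\<forall>a x y. E a x \<longrightarrow> E a y \<longrightarrow> x = y"
  shows "\<exists>p q. iso V E (K1K2_V p q) K1K2_E"
proof -
  have fin: "finite V" and inV: "\<And>u v. E u v \<Longrightarrow> u \<in> V \<and> v \<in> V"
    and irr: "\<And>u. \<not> E u u" and sym: "\<And>u v. E u v \<Longrightarrow> E v u"
    using g unfolding graph_def by blast+
  define I where "I = {v\<in>V. \<forall>u. \<not> E v u}"
  define nb where "nb v = (THE u. E v u)" for v
  have nb: "nb v = u" if "E v u" for v u
    unfolding nb_def by (rule the_equality) (use d that in blast)+
  define sel where "sel u v = (SOME w. w \<in> {u,v})" for u v :: 'a
  have selc: "sel u v = sel v u" for u v unfolding sel_def by (simp add: insert_commute)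
  have seli: "sel u v = u \<or> sel u v = v" for u v
  proof -
    have "sel u v \<in> {u,v}" unfolding sel_def by (rule someI[of _ u]) simp
    thus ?thesis by simp
  qed
  define T where "T = {v. \<exists>u. E v u \<and> sel v u = v}"
  have Tex: "(u \<in> T) \<noteq> (v \<in> T)" if uv: "E u v" for u v
  proof -
    have ne: "u \<noteq> v" using irr uv by blast
    have du: "\<And>w. E u w \<Longrightarrow> w = v" using d uv by blast
    have dv: "\<And>w. E v w \<Longrightarrow> w = u" using d sym[OF uv] by blast
    have 1: "u \<in> T \<longleftrightarrow> sel u v = u"
    proof
      assume "u \<in> T"
      then obtain w where w: "E u w" "sel u w = u" unfolding T_def by blast
      have "w = v" using du w(1) .
      thus "sel u v = u" using w(2) by simp
    next
      assume "sel u v = u" thus "u \<in> T" unfolding T_def using uv by blast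
    qed
    have 2: "v \<in> T \<longleftrightarrow> sel u v = v"
    proof
      assume "v \<in> T"
      then obtain w where w: "E v w" "sel v w = v" unfolding T_def by blast
      have "w = u" using dv w(1) .
      thus "sel u v = v" using w(2) selc[of u v] by simp
    next
      assume "sel u v = v" thus "v \<in> T" unfolding T_def using sym[OF uv] selc[of u v] by auto
    qed
    show ?thesis using 1 2 seli[of u v] ne by auto
  qed
  have TV: "T \<subseteq> V" using inV unfolding T_def by blast
  have IV: "I \<subseteq> V" unfolding I_def by blast
  obtain h where h: "bij_betw h {..<card I} I"
    using ex_bij_betw_nat_finite[of I] finite_subset[OF IV fin] atLeast0LessThan by metis
  obtain k where k: "bij_betw k {..<card T} T"
    using ex_bij_betw_nat_finite[of T] finite_subset[OF TV fin] atLeast0LessThan by metis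
  define W where "W = K1K2_V (card I) (card T)"
  define g where "g x = (case x of Inl i \<Rightarrow> h i | Inr jb \<Rightarrow> (if snd jb then nb (k (fst jb)) else k (fst jb)))" for x
  have Tnb: "E t (nb t)" if tT: "t \<in> T" for t
  proof -
    obtain u where "E t u" using tT unfolding T_def by blast
    thus ?thesis using nb by simp
  qed
  have hI: "h i \<in> I" if "i < card I" for i using h that unfolding bij_betw_def by auto
  have kT: "k j \<in> T" if "j < card T" for j using k that unfolding bij_betw_def by auto
  have IE: "\<not> E v u" "\<not> E u v" if "v \<in> I" for u v using that sym unfolding I_def by blast+
  have TI: "v \<in> T \<Longrightarrow> v \<notin> I" for v unfolding T_def I_def by blast
  have nbT: "nb t \<notin> T" "nb t \<notin> I" "nb t \<in> V" if "t \<in> T" for t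
    using Tex[OF Tnb[OF that]] that sym[OF Tnb[OF that]] inV[OF Tnb[OF that]] unfolding I_def by auto
  have kinj: "j = j'" if "j < card T" "j' < card T" "k j = k j'" for j j'
    using k that unfolding bij_betw_def inj_on_def by blast
  have hinj: "i = i'" if "i < card I" "i' < card I" "h i = h i'" for i i'
    using h that unfolding bij_betw_def inj_on_def by blast
  have Wc: "(\<exists>i<card I. x = Inl i) \<or> (\<exists>j<card T. x = Inr (j,False)) \<or> (\<exists>j<card T. x = Inr(j,True))"
    if "x \<in> W" for x using that unfolding W_def K1K2_V_def
    apply (elim UnE imageE)
     apply blast
    apply clarsimp
    done
  have gs: "g (Inl i) = h i" "g (Inr (j,False)) = k j" "g (Inr (j,True)) = nb (k j)" for i j
    unfolding g_def by simp_all
  have kk: "E (k j) (k j') \<longleftrightarrow> False" if "j < card T" "j' < card T" for j j'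
    using Tex kT[OF that(1)] kT[OF that(2)] by blast
  have nn: "E (nb (k j)) (nb (k j')) \<longleftrightarrow> False" if "j < card T" "j' < card T" for j j'
    using Tex nbT kT[OF that(1)] kT[OF that(2)] by blast
  have kn: "E (k j) (nb (k j')) \<longleftrightarrow> j = j'" if "j < card T" "j' < card T" for j j'
  proof
    assume e: "E (k j) (nb (k j'))"
    have "E (nb (k j')) (k j)" "E (nb (k j')) (k j')" using sym e Tnb kT that by auto
    hence "k j = k j'" using d by blast
    thus "j = j'" using kinj that by blast
  next
    assume "j = j'" thus "E (k j) (nb (k j'))" using Tnb kT that by auto
  qed
  have nk: "E (nb (k j')) (k j) \<longleftrightarrow> j = j'" if "j < card T" "j' < card T" for j j'
    using kn[OF that] sym by blast
  have edge: "E (g x) (g y) \<longleftrightarrow> K1K2_E x y" if "x \<in> W" "y \<in> W" for x y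
    using Wc[OF that(1)] Wc[OF that(2)]
    apply (elim disjE exE conjE)
    apply (simp_all add: gs K1K2_E_def IE hI kk nn kn nk)
    apply auto
    done
  have hh: "h i = h i' \<longleftrightarrow> i = i'" if "i < card I" "i' < card I" for i i'
    using hinj that by blast
  have kk2: "k j = k j' \<longleftrightarrow> j = j'" if "j < card T" "j' < card T" for j j'
    using kinj that by blast
  have nn2: "nb (k j) = nb (k j') \<longleftrightarrow> j = j'" if "j < card T" "j' < card T" for j j'
  proof
    assume e: "nb (k j) = nb (k j')"
    have "E (nb (k j)) (k j)" "E (nb (k j)) (k j')" using sym Tnb kT that e by metis+
    hence "k j = k j'" using d by blast
    thus "j = j'" using kinj that by blast
  qed simp
  have hk: "h i \<noteq> k j" "h i \<noteq> nb (k j)"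
    if "i < card I" "j < card T" for i j
    using hI[OF that(1)] kT[OF that(2)] TI nbT by metis+
  have kn3: "k j \<noteq> nb (k j')"
    if "j < card T" "j' < card T" for j j'
    using kT[OF that(1)] kT[OF that(2)] nbT by metis
  have inj: "inj_on g W"
  proof (rule inj_onI)
    fix x y assume xw: "x \<in> W" and yw: "y \<in> W" and gxy: "g x = g y"
    show "x = y"
      using Wc[OF xw] Wc[OF yw] gxy
      apply (elim disjE exE conjE)
      apply (simp_all add: gs hh kk2 nn2 hk hk[symmetric] kn3 kn3[symmetric])
      done
  qed
  have img: "g ` W = V"
  proof
    show "g ` W \<subseteq> V"
    proof
      fix v assume "v \<in> g ` W"
      then obtain x where x: "x \<in> W" "v = g x" by blast
      show "v \<in> V" using Wc[OF x(1)] x(2) gs hI kT nbT IV TV by auto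
    qed
  next
    show "V \<subseteq> g ` W"
    proof
      fix v assume v: "v \<in> V"
      show "v \<in> g ` W"
      proof (cases "v \<in> I")
        case True
        then obtain i where "i < card I" "v = h i" using h unfolding bij_betw_def by auto
        thus ?thesis unfolding W_def K1K2_V_def using gs by (auto intro!: image_eqI[of _ _ "Inl i"])
      next
        case False
        then obtain u where uv: "E v u" using v unfolding I_def by blast
        show ?thesis
        proof (cases "v \<in> T")
          case True
          then obtain j where "j < card T" "v = k j" using k unfolding bij_betw_def by auto
          thus ?thesis unfolding W_def K1K2_V_def using gs by (auto intro!: image_eqI[of _ _ "Inr (j,False)"])
        next
          case False
          have "u \<in> T" using Tex[OF uv] False by blast
          then obtain j where j: "j < card T" "u = k j" using k unfolding bij_betw_def by auto
          have "nb u = v" using nb sym[OF uv] by blast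
          thus ?thesis unfolding W_def K1K2_V_def using gs j by (auto intro!: image_eqI[of _ _ "Inr (j,True)"])
        qed
      qed
    qed
  qed
  have bij: "bij_betw g W V" using inj img unfolding bij_betw_def by blast
  define f where "f = inv_into W g"
  have fb: "bij_betw f V W" unfolding f_def by (rule bij_betw_inv_into[OF bij])
  have gf: "g (f u) = u" if "u \<in> V" for u unfolding f_def by (rule bij_betw_inv_into_right[OF bij that])
  have fW: "f u \<in> W" if "u \<in> V" for u using fb that unfolding bij_betw_def by blast
  have "\<forall>u\<in>V. \<forall>v\<in>V. E u v \<longleftrightarrow> K1K2_E (f u) (f v)"
    using edge[OF fW fW] gf by metis
  hence "iso V E W K1K2_E" using fb unfolding iso_def by blast
  thus ?thesis unfolding W_def by blast
qed

theorem theorem7: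
  fixes V1 :: "'a set" and E1 :: "'a \<Rightarrow> 'a \<Rightarrow> bool"
    and V2 :: "'b set" and E2 :: "'b \<Rightarrow> 'b \<Rightarrow> bool"
  assumes "graph V1 E1" and "graph V2 E2"
    and "card V1 \<ge> 2" and "card V2 \<ge> 2"
  shows "one_po (V1 \<times> V2) (cart_E E1 E2) \<longleftrightarrow>
     ((edgeless V1 E1 \<and> one_po V2 E2) \<or> (edgeless V2 E2 \<and> one_po V1 E1)) \<or>
     (\<exists>p q r s. iso V1 E1 (K1K2_V p q) K1K2_E \<and> iso V2 E2 (K1K2_V r s) K1K2_E)"
proof
  note g1 = assms(1) and g2 = assms(2)
  assume "one_po (V1 \<times> V2) (cart_E E1 E2)"
  then obtain D where D: "one_perfect_orientation (V1\<times>V2) (cart_E E1 E2) D"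
    unfolding one_po_def by blast
  have "V1 \<noteq> {}" using assms(3) by (metis card.empty not_numeral_le_zero)
  then obtain a0 where a0: "a0 \<in> V1" by blast
  have "V2 \<noteq> {}" using assms(4) by (metis card.empty not_numeral_le_zero)
  then obtain b0 where b0: "b0 \<in> V2" by blast
  show "((edgeless V1 E1 \<and> one_po V2 E2) \<or> (edgeless V2 E2 \<and> one_po V1 E1)) \<or>
     (\<exists>p q r s. iso V1 E1 (K1K2_V p q) K1K2_E \<and> iso V2 E2 (K1K2_V r s) K1K2_E)"
  proof (cases "edgeless V1 E1")
    case True
    thus ?thesis using induced_H[OF g1 g2 D a0] by blast
  next
    case F1: False
    show ?thesis
    proof (cases "edgeless V2 E2")
      case True
      thus ?thesis using induced_G[OF g1 g2 D b0] by blast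
    next
      case False
      obtain a a' where aa: "E1 a a'" using F1 unfolding edgeless_def by blast
      obtain b b' where bb: "E2 b b'" using False unfolding edgeless_def by blast
      have d2: "\<forall>u x y. E2 u x \<longrightarrow> E2 u y \<longrightarrow> x = y"
        using bad_H[OF g1 g2 D aa] by blast
      have d1: "\<forall>u x y. E1 u x \<longrightarrow> E1 u y \<longrightarrow> x = y"
        using bad_G[OF g1 g2 D bb] by blast
      obtain p q where "iso V1 E1 (K1K2_V p q) K1K2_E" using deg1_iso[OF g1 d1] by blast
      moreover obtain r s where "iso V2 E2 (K1K2_V r s) K1K2_E" using deg1_iso[OF g2 d2] by blast
      ultimately show ?thesis by blast
    qed
  qed
next
  note g1 = assms(1) and g2 = assms(2)
  assume "((edgeless V1 E1 \<and> one_po V2 E2) \<or> (edgeless V2 E2 \<and> one_po V1 E1)) \<or>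
     (\<exists>p q r s. iso V1 E1 (K1K2_V p q) K1K2_E \<and> iso V2 E2 (K1K2_V r s) K1K2_E)"
  then consider "edgeless V1 E1 \<and> one_po V2 E2" | "edgeless V2 E2 \<and> one_po V1 E1"
    | p q r s where "iso V1 E1 (K1K2_V p q) K1K2_E" "iso V2 E2 (K1K2_V r s) K1K2_E" by blast
  thus "one_po (V1 \<times> V2) (cart_E E1 E2)"
  proof cases
    case 1 thus ?thesis using edgeless_G[OF g1 g2] by blast
  next
    case 2 thus ?thesis using edgeless_H[OF g1 g2] by blast
  next
    case (3 p q r s)
    obtain t1 :: "'a \<Rightarrow> bool" where t1: "\<forall>u v. E1 u v \<longrightarrow> t1 u \<noteq> t1 v" "\<forall>a x y. E1 a x \<longrightarrow> E1 a y \<longrightarrow> x = y"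
      using iso_prop[OF g1 3(1)] by blast
    obtain t2 :: "'b \<Rightarrow> bool" where t2: "\<forall>u v. E2 u v \<longrightarrow> t2 u \<noteq> t2 v" "\<forall>a x y. E2 a x \<longrightarrow> E2 a y \<longrightarrow> x = y"
      using iso_prop[OF g2 3(2)] by blast
    show ?thesis using matchings[OF g1 g2 t1 t2] .
  qed
qed

end
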